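(* Fix $0<\beta<1$. For every general channel $\mathbf W$ and all reals $R_1,R_2$, \[ C_p(R_2,R_1\mid\mathbf W)=\inf_{\mathbf P}\lim_{\gamma\downarrow0}I_p(R_2-\gamma,R_1\mid\mathbf P,\mathbf W)=\inf_{\mathbf P}\sup_{\mathbf Q}\lim_{\gamma\downarrow0}J_p(R_2-\gamma,R_1\mid\mathbf P,\mathbf Q,\mathbf W), \] and for every $0\le\epsilon<1$, \[ C(\epsilon,R_1\mid\mathbf W)=\sup_{\mathbf P}I(\epsilon,R_1\mid\mathbf P,\mathbf W)=\sup_{\mathbf P}\inf_{\mathbf Q}J(\epsilon,R_1\mid\mathbf P,\mathbf Q,\mathbf W). \]
   Context: A general channel $\mathbf W=\{W^n\}_{n\ge1}$ consists of finite (or countable) sets $\mathcal X_n,\mathcal Y_n$ and distributions $W^n_x$ on $\mathcal Y_n$, $x\in\mathcal X_n$. $\mathbf P=\{P^n\}$ ranges over sequences of distributions on $\mathcal X_n$, $\mathbf Q=\{Q^n\}$ over sequences of distributions on $\mathcal Y_n$; $W^n_{P^n}=\sum_xP^n(x)W^n_x$. Logarithms natural. Define $I_p(R_2,R_1|\mathbf P,\mathbf W)=\limsup_n\sum_xP^n(x)W^n_x\{y:\frac1{n^\beta}(\log\frac{W^n_x(y)}{W^n_{P^n}(y)}-nR_1)<R_2\}$, $I(\epsilon,R_1|\mathbf P,\mathbf W)=\sup\{R_2:I_p(R_2,R_1|\mathbf P,\mathbf W)\le\epsilon\}$; $J_p(R_2,R_1|\mathbf P,\mathbf Q,\mathbf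 W)$ and $J(\epsilon,R_1|\mathbf P,\mathbf Q,\mathbf W)$ are defined identically with $W^n_{P^n}(y)$ replaced by $Q^n(y)$. A code for $W^n$ is $\Phi=(N,\phi,\{\mathcal D_i\}_{i=1}^N)$, $\phi:\{1..N\}\to\mathcal X_n$, disjoint $\mathcal D_i\subset\mathcal Y_n$; $|\Phi|=N$; $P_{e,W^n}(\Phi)=\frac1N\sum_i(1-W^n_{\phi(i)}(\mathcal D_i))$. Over all code sequences: $C_p(R_2,R_1|\mathbf W)=\inf\{\limsup_nP_{e,W^n}(\Phi_n):\liminf_n\frac1{n^\beta}(\log|\Phi_n|-nR_1)\ge R_2\}$, $C(\epsilon,R_1|\mathbf W)=\sup\{\liminf_n\frac1{n^\beta}(\log|\Phi_n|-nR_1):\limsup_nP_{e,W^n}(\Phi_n)\le\epsilon\}$. *)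

theory Defs
  imports "HOL-Probability.Probability"
begin

text \<open>Sequences are indexed by
  all n :: nat (index 0 is irrelevant for all limsup/liminf quantities).\<close>

definition is_channel :: "(nat \<Rightarrow> 'x set) \<Rightarrow> (nat \<Rightarrow> 'y set) \<Rightarrow> (nat \<Rightarrow> 'x \<Rightarrow> 'y pmf) \<Rightarrow> bool" where
  "is_channel X Y W \<longleftrightarrow>
     (\<forall>n. countable (X n) \<and> X n \<noteq> {} \<and> countable (Y n) \<and>
          (\<forall>x\<in>X n. set_pmf (W n x) \<subseteq> Y n))"

definition input_seqs :: "(nat \<Rightarrow> 'x set) \<Rightarrow> (nat \<Rightarrow> 'x pmf) set" where
  "input_seqs X = {P. \<forall>n. set_pmf (P n) \<subseteq> X n}"

definition output_seqs :: "(nat \<Rightarrow> 'y set) \<Rightarrow> (nat \<Rightarrow> 'y pmf) set" where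
  "output_seqs Y = {Q. \<forall>n. set_pmf (Q n) \<subseteq> Y n}"

definition out_dist :: "(nat \<Rightarrow> 'x \<Rightarrow> 'y pmf) \<Rightarrow> (nat \<Rightarrow> 'x pmf) \<Rightarrow> nat \<Rightarrow> 'y pmf" where
  "out_dist W P n = bind_pmf (P n) (W n)"

definition Ip :: "real \<Rightarrow> (nat \<Rightarrow> 'x \<Rightarrow> 'y pmf) \<Rightarrow> real \<Rightarrow> real \<Rightarrow> (nat \<Rightarrow> 'x pmf) \<Rightarrow> ereal" where
  "Ip \<beta> W R2 R1 P = limsup (\<lambda>n. ereal (measure_pmf.expectation (P n)
      (\<lambda>x. measure_pmf.prob (W n x)
        {y. (ln (pmf (W n x) y / pmf (out_dist W P n) y) - real n * R1) / real n powr \<beta> < R2})))"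

definition Icap :: "real \<Rightarrow> (nat \<Rightarrow> 'x \<Rightarrow> 'y pmf) \<Rightarrow> real \<Rightarrow> real \<Rightarrow> (nat \<Rightarrow> 'x pmf) \<Rightarrow> ereal" where
  "Icap \<beta> W \<epsilon> R1 P = Sup (ereal ` {R2. Ip \<beta> W R2 R1 P \<le> ereal \<epsilon>})"

text \<open>J_p(R2,R1|P,Q,W): W^n_{P^n}(y) replaced by Q^n(y).  Where Q^n(y) = 0 the
  information density log(W(y)/Q(y)) is +infinity, hence not below R2.\<close>

definition Jp :: "real \<Rightarrow> (nat \<Rightarrow> 'x \<Rightarrow> 'y pmf) \<Rightarrow> real \<Rightarrow> real \<Rightarrow> (nat \<Rightarrow> 'x pmf) \<Rightarrow> (nat \<Rightarrow> 'y pmf) \<Rightarrow> ereal" where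
  "Jp \<beta> W R2 R1 P Q = limsup (\<lambda>n. ereal (measure_pmf.expectation (P n)
      (\<lambda>x. measure_pmf.prob (W n x)
        {y. 0 < pmf (Q n) y \<and>
            (ln (pmf (W n x) y / pmf (Q n) y) - real n * R1) / real n powr \<beta> < R2})))"

definition Jcap :: "real \<Rightarrow> (nat \<Rightarrow> 'x \<Rightarrow> 'y pmf) \<Rightarrow> real \<Rightarrow> real \<Rightarrow> (nat \<Rightarrow> 'x pmf) \<Rightarrow> (nat \<Rightarrow> 'y pmf) \<Rightarrow> ereal" where
  "Jcap \<beta> W \<epsilon> R1 P Q = Sup (ereal ` {R2. Jp \<beta> W R2 R1 P Q \<le> ereal \<epsilon>})"

type_synonym ('x,'y) code = "nat \<times> (nat \<Rightarrow> 'x) \<times> (nat \<Rightarrow> 'y set)"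

definition is_code :: "(nat \<Rightarrow> 'x set) \<Rightarrow> (nat \<Rightarrow> 'y set) \<Rightarrow> nat \<Rightarrow> ('x,'y) code \<Rightarrow> bool" where
  "is_code X Y n c \<longleftrightarrow> (case c of (N, \<phi>, D) \<Rightarrow>
      1 \<le> N \<and> (\<forall>i\<in>{1..N}. \<phi> i \<in> X n \<and> D i \<subseteq> Y n) \<and> disjoint_family_on D {1..N})"

definition code_size :: "('x,'y) code \<Rightarrow> nat" where
  "code_size c = fst c"

definition err_prob :: "(nat \<Rightarrow> 'x \<Rightarrow> 'y pmf) \<Rightarrow> nat \<Rightarrow> ('x,'y) code \<Rightarrow> real" where
  "err_prob W n c = (case c of (N, \<phi>, D) \<Rightarrow>
      (1 / real N) * (\<Sum>i=1..N. 1 - measure_pmf.prob (W n (\<phi> i)) (D i)))"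

definition code_seqs :: "(nat \<Rightarrow> 'x set) \<Rightarrow> (nat \<Rightarrow> 'y set) \<Rightarrow> (nat \<Rightarrow> ('x,'y) code) set" where
  "code_seqs X Y = {\<Phi>. \<forall>n. is_code X Y n (\<Phi> n)}"

definition second_order_rate :: "real \<Rightarrow> real \<Rightarrow> (nat \<Rightarrow> ('x,'y) code) \<Rightarrow> ereal" where
  "second_order_rate \<beta> R1 \<Phi> =
     liminf (\<lambda>n. ereal ((ln (real (code_size (\<Phi> n))) - real n * R1) / real n powr \<beta>))"

definition Cp :: "real \<Rightarrow> (nat \<Rightarrow> 'x set) \<Rightarrow> (nat \<Rightarrow> 'y set) \<Rightarrow> (nat \<Rightarrow> 'x \<Rightarrow> 'y pmf) \<Rightarrow> real \<Rightarrow> real \<Rightarrow> ereal" where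
  "Cp \<beta> X Y W R2 R1 = Inf {limsup (\<lambda>n. ereal (err_prob W n (\<Phi> n))) | \<Phi>.
      \<Phi> \<in> code_seqs X Y \<and> ereal R2 \<le> second_order_rate \<beta> R1 \<Phi>}"

definition Ccap :: "real \<Rightarrow> (nat \<Rightarrow> 'x set) \<Rightarrow> (nat \<Rightarrow> 'y set) \<Rightarrow> (nat \<Rightarrow> 'x \<Rightarrow> 'y pmf) \<Rightarrow> real \<Rightarrow> real \<Rightarrow> ereal" where
  "Ccap \<beta> X Y W \<epsilon> R1 = Sup {second_order_rate \<beta> R1 \<Phi> | \<Phi>.
      \<Phi> \<in> code_seqs X Y \<and> limsup (\<lambda>n. ereal (err_prob W n (\<Phi> n))) \<le> ereal \<epsilon>}"

end

theory Submission
  imports Defs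
begin


lemma pmf_le_prob: assumes "\<And>y. y \<in> A \<Longrightarrow> pmf p y \<le> c * pmf q y" "c \<ge> 0"
  shows "measure_pmf.prob p A \<le> c * measure_pmf.prob q A"
proof -
  have "measure_pmf.prob p A = infsetsum (pmf p) A" by (rule measure_pmf_conv_infsetsum)
  also have "\<dots> \<le> infsetsum (\<lambda>y. c * pmf q y) A"
    by (rule infsetsum_mono) (auto intro!: abs_summable_on_cmult_right assms)
  also have "\<dots> = c * infsetsum (pmf q) A" by (rule infsetsum_cmult_right) auto
  finally show ?thesis by (simp add: measure_pmf_conv_infsetsum)
qed

lemma converse_one:
  fixes W :: "'x \<Rightarrow> 'y pmf" and \<phi> :: "nat \<Rightarrow> 'x" and D :: "nat \<Rightarrow> 'y set" and Q :: "'y pmf"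
  assumes N: "1 \<le> N" and dj: "disjoint_family_on D {1..N}"
  shows "(\<Sum>i=1..N. measure_pmf.prob (W (\<phi> i)) {y. 0 < pmf Q y \<and> ln (pmf (W (\<phi> i)) y / pmf Q y) < a}) / real N
   \<le> (1/real N) * (\<Sum>i=1..N. 1 - measure_pmf.prob (W (\<phi> i)) (D i)) + exp a / real N"
proof -
  define A where "A i = {y. 0 < pmf Q y \<and> ln (pmf (W (\<phi> i)) y / pmf Q y) < a}" for i
  have one: "measure_pmf.prob (W (\<phi> i)) (A i) \<le> exp a * measure_pmf.prob Q (D i) + (1 - measure_pmf.prob (W (\<phi> i)) (D i))" for i
  proof -
    have "measure_pmf.prob (W (\<phi> i)) (A i) \<le> measure_pmf.prob (W (\<phi> i)) (A i \<inter> D i) + measure_pmf.prob (W (\<phi> i)) (A i - D i)"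
    proof -
      have "measure_pmf.prob (W (\<phi> i)) (A i) = measure_pmf.prob (W (\<phi> i)) ((A i \<inter> D i) \<union> (A i - D i))"
        by (metis Int_Diff_Un)
      also have "\<dots> = measure_pmf.prob (W (\<phi> i)) (A i \<inter> D i) + measure_pmf.prob (W (\<phi> i)) (A i - D i)"
        by (rule measure_pmf.finite_measure_Union) auto
      finally show ?thesis by simp
    qed
    moreover have "measure_pmf.prob (W (\<phi> i)) (A i \<inter> D i) \<le> exp a * measure_pmf.prob Q (A i \<inter> D i)"
    proof (rule pmf_le_prob)
      fix y assume y: "y \<in> A i \<inter> D i"
      show "pmf (W (\<phi> i)) y \<le> exp a * pmf Q y"
      proof (cases "pmf (W (\<phi> i)) y = 0")
        case True then show ?thesis by simp
      next
        case False
        then have pos: "0 < pmf (W (\<phi> i)) y / pmf Q y" using y by (auto simp: A_def pmf_nonneg intro!: divide_pos_pos order.not_eq_order_implies_strict)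
        have "pmf (W (\<phi> i)) y / pmf Q y = exp (ln (pmf (W (\<phi> i)) y / pmf Q y))" using pos by simp
        also have "\<dots> < exp a" using y by (auto simp: A_def)
        finally show ?thesis using y by (auto simp: A_def field_simps)
      qed
    qed simp
    moreover have "measure_pmf.prob Q (A i \<inter> D i) \<le> measure_pmf.prob Q (D i)"
      by (rule measure_pmf.finite_measure_mono) auto
    moreover have "measure_pmf.prob (W (\<phi> i)) (A i - D i) \<le> measure_pmf.prob (W (\<phi> i)) (UNIV - D i)"
      by (rule measure_pmf.finite_measure_mono) auto
    moreover have "measure_pmf.prob (W (\<phi> i)) (UNIV - D i) = 1 - measure_pmf.prob (W (\<phi> i)) (D i)"
      using measure_pmf.prob_compl[of "D i" "W (\<phi> i)"] by simp
    ultimately show ?thesis by (smt (verit) exp_gt_zero mult_left_mono)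
  qed
  have "(\<Sum>i=1..N. measure_pmf.prob (W (\<phi> i)) (A i)) \<le> (\<Sum>i=1..N. exp a * measure_pmf.prob Q (D i) + (1 - measure_pmf.prob (W (\<phi> i)) (D i)))"
    by (rule sum_mono) (rule one)
  also have "\<dots> = exp a * (\<Sum>i=1..N. measure_pmf.prob Q (D i)) + (\<Sum>i=1..N. 1 - measure_pmf.prob (W (\<phi> i)) (D i))"
    by (simp add: sum.distrib sum_distrib_left)
  finally have T: "(\<Sum>i=1..N. measure_pmf.prob (W (\<phi> i)) (A i)) \<le> exp a * (\<Sum>i=1..N. measure_pmf.prob Q (D i)) + (\<Sum>i=1..N. 1 - measure_pmf.prob (W (\<phi> i)) (D i))" .
  have S: "(\<Sum>i=1..N. measure_pmf.prob Q (D i)) = measure_pmf.prob Q (\<Union>i\<in>{1..N}. D i)"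
    by (rule measure_pmf.finite_measure_finite_Union[symmetric]) (use dj in auto)
  have S1: "(\<Sum>i=1..N. measure_pmf.prob Q (D i)) \<le> 1" unfolding S by simp
  have "exp a * (\<Sum>i=1..N. measure_pmf.prob Q (D i)) \<le> exp a"
    using mult_left_mono[OF S1, of "exp a"] by simp
  then have "(\<Sum>i=1..N. measure_pmf.prob (W (\<phi> i)) (A i)) \<le> exp a + (\<Sum>i=1..N. 1 - measure_pmf.prob (W (\<phi> i)) (D i))"
    using T by linarith
  then have "(\<Sum>i=1..N. measure_pmf.prob (W (\<phi> i)) (A i)) / real N \<le> (exp a + (\<Sum>i=1..N. 1 - measure_pmf.prob (W (\<phi> i)) (D i))) / real N"
    by (rule divide_right_mono) simp
  then show ?thesis unfolding A_def by (simp add: add_divide_distrib)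
qed

lemma intg_prob: "integrable (measure_pmf p) (\<lambda>x. measure_pmf.prob (W x) (A x))"
  by (rule measure_pmf.integrable_const_bound[where B=1]) auto

lemma bind_prob: "measure_pmf.prob (bind_pmf P W) A = measure_pmf.expectation P (\<lambda>x. measure_pmf.prob (W x) A)"
  using measurable_measure_pmf[of W]
  unfolding measure_pmf_bind
  by (subst measure_pmf.measure_bind[where N="count_space UNIV"]) auto

lemma feinstein_greedy:
  fixes W :: "'x \<Rightarrow> 'y pmf" and P :: "'x pmf" and a :: real
  defines "WP \<equiv> bind_pmf P W"
  defines "G \<equiv> \<lambda>x. {y \<in> set_pmf (W x). a < ln (pmf (W x) y / pmf WP y)}"
  defines "F \<equiv> measure_pmf.expectation P (\<lambda>x. measure_pmf.prob (W x) {y. ln (pmf (W x) y / pmf WP y) \<le> a})"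
  shows "\<exists>f. \<forall>i<N. f i \<in> set_pmf P \<and>
            1 - measure_pmf.prob (W (f i)) (G (f i) - (\<Union>j<i. G (f j))) \<le> F + real N * exp (-a)"
proof -
  define \<tau> where "\<tau> = F + real N * exp (-a)"
  define B where "B x = {y. ln (pmf (W x) y / pmf WP y) \<le> a}" for x
  have gP: "measure_pmf.prob WP (G x) \<le> exp (-a)" for x
  proof -
    have "measure_pmf.prob WP (G x) \<le> exp (-a) * measure_pmf.prob (W x) (G x)"
    proof (rule pmf_le_prob)
      fix y assume y: "y \<in> G x"
      show "pmf WP y \<le> exp (- a) * pmf (W x) y"
      proof (cases "pmf WP y = 0")
        case True then show ?thesis by simp
      next
        case False
        then have wp: "pmf WP y > 0" by (simp add: order.not_eq_order_implies_strict pmf_nonneg)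
        have wx: "pmf (W x) y > 0" using y by (auto simp: G_def set_pmf_iff order.not_eq_order_implies_strict pmf_nonneg)
        have "exp a < exp (ln (pmf (W x) y / pmf WP y))" using y by (auto simp: G_def)
        also have "\<dots> = pmf (W x) y / pmf WP y" using wp wx by simp
        finally have "exp a * pmf WP y < pmf (W x) y" using wp by (simp add: field_simps)
        then have "exp (-a) * (exp a * pmf WP y) \<le> exp (-a) * pmf (W x) y" by simp
        then show ?thesis by (simp add: exp_minus field_simps)
      qed
    qed simp
    also have "\<dots> \<le> exp (-a)" by simp
    finally show ?thesis .
  qed
  have gW: "measure_pmf.prob (W x) (G x) = 1 - measure_pmf.prob (W x) (B x)" for x
  proof -
    have "G x = (UNIV - B x) \<inter> set_pmf (W x)" by (auto simp: G_def B_def)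
    then have "measure_pmf.prob (W x) (G x) = measure_pmf.prob (W x) (UNIV - B x)"
      by (simp add: measure_Int_set_pmf)
    also have "\<dots> = 1 - measure_pmf.prob (W x) (B x)"
      using measure_pmf.prob_compl[of "B x" "W x"] by simp
    finally show ?thesis .
  qed
  have EG: "measure_pmf.expectation P (\<lambda>x. measure_pmf.prob (W x) (G x)) = 1 - F"
  proof -
    have "measure_pmf.expectation P (\<lambda>x. measure_pmf.prob (W x) (G x))
        = measure_pmf.expectation P (\<lambda>x. 1 - measure_pmf.prob (W x) (B x))" by (simp add: gW)
    also have "\<dots> = 1 - F"
      by (subst Bochner_Integration.integral_diff) (auto simp: intg_prob F_def B_def)
    finally show ?thesis .
  qed
  have step: "\<exists>x\<in>set_pmf P. 1 - measure_pmf.prob (W x) (G x - (\<Union>j<M. G (f j))) \<le> \<tau>"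
    if M: "M < N" for M f
  proof (rule ccontr)
    assume nt: "\<not> ?thesis"
    define U where "U = (\<Union>j<M. G (f j))"
    have lt: "x \<in> set_pmf P \<Longrightarrow> measure_pmf.prob (W x) (G x - U) \<le> 1 - \<tau>" for x
      using nt unfolding U_def by force
    have sub: "measure_pmf.prob (W x) (G x) \<le> measure_pmf.prob (W x) U + measure_pmf.prob (W x) (G x - U)" for x
    proof -
      have "measure_pmf.prob (W x) (G x) \<le> measure_pmf.prob (W x) (U \<union> (G x - U))"
        by (rule measure_pmf.finite_measure_mono) auto
      also have "\<dots> \<le> measure_pmf.prob (W x) U + measure_pmf.prob (W x) (G x - U)"
        by (rule measure_Un_le) auto
      finally show ?thesis .
    qed
    have "1 - F \<le> measure_pmf.expectation P (\<lambda>x. measure_pmf.prob (W x) U + (1 - \<tau>))"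
      unfolding EG[symmetric]
    proof (rule integral_mono_AE)
      show "AE x in measure_pmf P. measure_pmf.prob (W x) (G x) \<le> measure_pmf.prob (W x) U + (1 - \<tau>)"
        unfolding AE_measure_pmf_iff using sub lt by (meson add_left_mono order_trans)
    qed (auto intro!: intg_prob Bochner_Integration.integrable_add)
    also have "\<dots> = measure_pmf.prob WP U + (1 - \<tau>)"
      by (subst Bochner_Integration.integral_add) (auto intro!: intg_prob simp: WP_def bind_prob)
    also have "measure_pmf.prob WP U \<le> (\<Sum>j<M. measure_pmf.prob WP (G (f j)))"
      unfolding U_def by (rule measure_pmf.finite_measure_subadditive_finite) auto
    also have "\<dots> \<le> (\<Sum>j<M. exp (-a))" by (rule sum_mono) (rule gP)
    finally have "1 - F \<le> real M * exp (-a) + (1 - \<tau>)" by simp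
    then have "real N * exp (-a) \<le> real M * exp (-a)" unfolding \<tau>_def by simp
    then have "real N \<le> real M" by simp
    then show False using M by simp
  qed
  have "\<forall>M\<le>N. \<exists>f. \<forall>i<M. f i \<in> set_pmf P \<and>
            1 - measure_pmf.prob (W (f i)) (G (f i) - (\<Union>j<i. G (f j))) \<le> \<tau>"
  proof (intro allI impI)
    fix M assume "M \<le> N"
    then show "\<exists>f. \<forall>i<M. f i \<in> set_pmf P \<and>
            1 - measure_pmf.prob (W (f i)) (G (f i) - (\<Union>j<i. G (f j))) \<le> \<tau>"
    proof (induction M)
      case 0 then show ?case by simp
    next
      case (Suc M)
      then obtain f where f: "\<forall>i<M. f i \<in> set_pmf P \<and>
            1 - measure_pmf.prob (W (f i)) (G (f i) - (\<Union>j<i. G (f j))) \<le> \<tau>" by auto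
      obtain x where x: "x \<in> set_pmf P" "1 - measure_pmf.prob (W x) (G x - (\<Union>j<M. G (f j))) \<le> \<tau>"
        using step[of M f] Suc.prems by auto
      define f' where "f' = f(M := x)"
      have "\<forall>i<Suc M. f' i \<in> set_pmf P \<and>
            1 - measure_pmf.prob (W (f' i)) (G (f' i) - (\<Union>j<i. G (f' j))) \<le> \<tau>"
      proof (intro allI impI)
        fix i assume i: "i < Suc M"
        show "f' i \<in> set_pmf P \<and> 1 - measure_pmf.prob (W (f' i)) (G (f' i) - (\<Union>j<i. G (f' j))) \<le> \<tau>"
        proof (cases "i = M")
          case True
          have "(\<Union>j<i. G (f' j)) = (\<Union>j<M. G (f j))" using True by (auto simp: f'_def)
          then show ?thesis using True x by (simp add: f'_def)
        next
          case False
          then have iM: "i < M" using i by simp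
          have "(\<Union>j<i. G (f' j)) = (\<Union>j<i. G (f j))" using iM by (auto simp: f'_def)
          then show ?thesis using f iM False by (simp add: f'_def)
        qed
      qed
      then show ?case by blast
    qed
  qed
  then show ?thesis unfolding \<tau>_def by blast
qed


lemma powr_top: "0 < \<beta> \<Longrightarrow> filterlim (\<lambda>n::nat. real n powr \<beta>) at_top sequentially"
  unfolding filterlim_at_top
proof (intro allI)
  fix Z :: real assume b: "0 < \<beta>"
  define M where "M = max Z 1 powr (1/\<beta>)"
  have "eventually (\<lambda>n::nat. M \<le> real n) sequentially"
    using filterlim_real_sequentially unfolding filterlim_at_top by blast
  then show "eventually (\<lambda>n. Z \<le> real n powr \<beta>) sequentially"
  proof (rule eventually_mono)
    fix n :: nat assume "M \<le> real n"
    then have "M powr \<beta> \<le> real n powr \<beta>" using b by (intro powr_mono2) (auto simp: M_def)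
    moreover have "M powr \<beta> = max Z 1" using b by (simp add: M_def powr_powr)
    ultimately show "Z \<le> real n powr \<beta>" by simp
  qed
qed

lemma exp_null: "0 < \<beta> \<Longrightarrow> 0 < \<delta> \<Longrightarrow> (\<lambda>n::nat. exp (- \<delta> * real n powr \<beta>)) \<longlonglongrightarrow> 0"
proof -
  assume b: "0 < \<beta>" and d: "0 < \<delta>"
  have "filterlim (\<lambda>n::nat. \<delta> * real n powr \<beta>) at_top sequentially"
    by (rule filterlim_tendsto_pos_mult_at_top[OF tendsto_const d powr_top[OF b]])
  then have "filterlim (\<lambda>n::nat. - \<delta> * real n powr \<beta>) at_bot sequentially"
    by (simp add: filterlim_uminus_at_top[symmetric])
  then show ?thesis by (rule filterlim_compose[OF exp_at_bot])
qed

lemma exp_nat_null: "(\<lambda>k::nat. exp (- real k)) \<longlonglongrightarrow> 0"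
proof -
  have "filterlim (\<lambda>k::nat. - real k) at_bot sequentially"
    using filterlim_real_sequentially by (simp add: filterlim_uminus_at_top[symmetric])
  then show ?thesis by (rule filterlim_compose[OF exp_at_bot])
qed

lemma Lim_mono_left:
  fixes h :: "real \<Rightarrow> ereal"
  assumes mono: "\<And>a b. a \<le> b \<Longrightarrow> h a \<le> h b"
  shows "Lim (at_right 0) (\<lambda>\<gamma>. h (R - \<gamma>)) = (SUP \<gamma>\<in>{0<..}. h (R - \<gamma>))"
proof (rule tendsto_Lim)
  show "at_right (0::real) \<noteq> bot" by simp
  define S where "S = (SUP \<gamma>\<in>{0<..}. h (R - \<gamma>))"
  show "((\<lambda>\<gamma>. h (R - \<gamma>)) \<longlongrightarrow> S) (at_right 0)"
  proof (rule order_tendstoI)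
    fix y assume "y < S"
    then obtain g where g: "g > 0" "y < h (R - g)" unfolding S_def less_SUP_iff by auto
    have "eventually (\<lambda>\<gamma>. \<gamma> < g) (at_right (0::real))"
      using g(1) eventually_at_right_less order_tendstoD(2) tendsto_ident_at by blast
    then show "eventually (\<lambda>\<gamma>. y < h (R - \<gamma>)) (at_right 0)"
    proof (rule eventually_mono)
      fix \<gamma> :: real assume "\<gamma> < g"
      then have "h (R - g) \<le> h (R - \<gamma>)" by (intro mono) simp
      then show "y < h (R - \<gamma>)" using g by simp
    qed
  next
    fix y assume "S < y"
    have "eventually (\<lambda>\<gamma>. \<gamma> > 0) (at_right (0::real))" by (simp add: eventually_at_right_less)
    then show "eventually (\<lambda>\<gamma>. h (R - \<gamma>) < y) (at_right 0)"
    proof (rule eventually_mono)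
      fix \<gamma> :: real assume "\<gamma> > 0"
      then have "h (R - \<gamma>) \<le> S" unfolding S_def by (intro SUP_upper) simp
      then show "h (R - \<gamma>) < y" using \<open>S < y\<close> by simp
    qed
  qed
qed

lemma limsup_add_null:
  fixes f g e :: "nat \<Rightarrow> real"
  assumes e: "e \<longlonglongrightarrow> 0" and ev: "eventually (\<lambda>n. f n \<le> g n + e n) sequentially"
  shows "limsup (\<lambda>n. ereal (f n)) \<le> limsup (\<lambda>n. ereal (g n))"
proof -
  have "limsup (\<lambda>n. ereal (f n)) \<le> limsup (\<lambda>n. ereal (e n) + ereal (g n))"
    by (rule Limsup_mono) (use ev in \<open>auto elim!: eventually_mono simp: add.commute\<close>)
  also have "\<dots> = 0 + limsup (\<lambda>n. ereal (g n))"
    by (rule ereal_limsup_lim_add) (use e in \<open>auto simp: zero_ereal_def\<close>)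
  finally show ?thesis by simp
qed

lemma diag:
  fixes Pk :: "nat \<Rightarrow> nat \<Rightarrow> bool"
  assumes ev: "\<And>k. eventually (Pk k) sequentially"
  shows "\<exists>kn. filterlim kn at_top sequentially \<and> eventually (\<lambda>n. Pk (kn n) n) sequentially"
proof -
  define Q where "Q k n = (\<forall>j\<in>{..k}. Pk j n)" for k n
  have evQ: "eventually (Q k) sequentially" for k
    unfolding Q_def by (rule eventually_ball_finite) (use ev in auto)  
  define N where "N k = (LEAST m. \<forall>n\<ge>m. Q k n)" for k
  have NQ: "n \<ge> N k \<Longrightarrow> Q k n" for k n
  proof -
    obtain m where "\<forall>n\<ge>m. Q k n" using evQ[of k] by (auto simp: eventually_sequentially)
    then have "\<forall>n\<ge>N k. Q k n" unfolding N_def by (rule LeastI)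
    then show "n \<ge> N k \<Longrightarrow> Q k n" by auto
  qed
  define kn where "kn n = Max {k. k \<le> n \<and> N k \<le> n}" for n
  have fin: "finite {k. k \<le> n \<and> N k \<le> n}" for n by simp
  have mem: "K \<le> n \<Longrightarrow> N K \<le> n \<Longrightarrow> K \<le> kn n" for K n
    unfolding kn_def by (rule Max_ge) (auto simp: fin)
  have "filterlim kn at_top sequentially"
    unfolding filterlim_at_top
  proof (intro allI)
    fix K
    show "eventually (\<lambda>n. K \<le> kn n) sequentially"
      unfolding eventually_sequentially by (rule exI[of _ "max K (N K)"]) (auto intro: mem)
  qed
  moreover have "eventually (\<lambda>n. Pk (kn n) n) sequentially"
    unfolding eventually_sequentially
  proof (rule exI[of _ "N 0"], intro allI impI)
    fix n assume n: "N 0 \<le> n"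
    have "kn n \<in> {k. k \<le> n \<and> N k \<le> n}"
      unfolding kn_def by (rule Max_in) (use n in \<open>auto intro!: exI[of _ 0]\<close>)
    then have "Q (kn n) n" using NQ by auto
    then show "Pk (kn n) n" unfolding Q_def by auto
  qed
  ultimately show ?thesis by blast
qed


lemma feinstein_code:
  fixes W :: "nat \<Rightarrow> 'x \<Rightarrow> 'y pmf"
  assumes ch: "is_channel X Y W" and P: "set_pmf P \<subseteq> X n" and N: "1 \<le> N"
  shows "\<exists>c. is_code X Y n c \<and> code_size c = N \<and> err_prob W n c \<le>
     measure_pmf.expectation P (\<lambda>x. measure_pmf.prob (W n x) {y. ln (pmf (W n x) y / pmf (bind_pmf P (W n)) y) \<le> a})
     + real N * exp (-a)"
proof -
  define G where "G x = {y \<in> set_pmf (W n x). a < ln (pmf (W n x) y / pmf (bind_pmf P (W n)) y)}" for x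
  define \<tau> where "\<tau> = measure_pmf.expectation P (\<lambda>x. measure_pmf.prob (W n x) {y. ln (pmf (W n x) y / pmf (bind_pmf P (W n)) y) \<le> a})
     + real N * exp (-a)"
  obtain f where f: "\<forall>i<N. f i \<in> set_pmf P \<and> 1 - measure_pmf.prob (W n (f i)) (G (f i) - (\<Union>j<i. G (f j))) \<le> \<tau>"
    using feinstein_greedy[where P=P and W="W n" and a=a and N=N] unfolding G_def \<tau>_def by blast
  define \<phi> where "\<phi> i = f (i - 1)" for i
  define D where "D i = G (f (i - 1)) - (\<Union>j<i - 1. G (f j))" for i
  have fX: "i \<in> {1..N} \<Longrightarrow> f (i - 1) \<in> X n" for i using f P by auto
  have "is_code X Y n (N, \<phi>, D)"
    unfolding is_code_def prod.case
  proof (intro conjI ballI)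
    show "1 \<le> N" by (rule N)
    fix i assume i: "i \<in> {1..N}"
    show "\<phi> i \<in> X n" using fX[OF i] by (simp add: \<phi>_def)
    have "D i \<subseteq> set_pmf (W n (f (i - 1)))" by (auto simp: D_def G_def)
    also have "\<dots> \<subseteq> Y n" using ch fX[OF i] by (auto simp: is_channel_def)
    finally show "D i \<subseteq> Y n" .
  next
    have "D i \<inter> D j = {}" if "i < j" "1 \<le> i" for i j
    proof -
      have "D i \<subseteq> G (f (i - 1))" by (auto simp: D_def)
      moreover have "i - 1 < j - 1" using that by simp
      then have "D j \<inter> G (f (i - 1)) = {}" by (auto simp: D_def)
      ultimately show ?thesis by blast
    qed
    then show "disjoint_family_on D {1..N}"
      unfolding disjoint_family_on_def by (metis Int_commute atLeastAtMost_iff linorder_neqE_nat)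
  qed
  moreover have "err_prob W n (N, \<phi>, D) \<le> \<tau>"
  proof -
    have "(\<Sum>i=1..N. 1 - measure_pmf.prob (W n (\<phi> i)) (D i)) \<le> (\<Sum>i=1..N. \<tau>)"
    proof (rule sum_mono)
      fix i assume i: "i \<in> {1..N}"
      then have "i - 1 < N" by auto
      then show "1 - measure_pmf.prob (W n (\<phi> i)) (D i) \<le> \<tau>" using f by (simp add: \<phi>_def D_def)
    qed
    then have "(1 / real N) * (\<Sum>i=1..N. 1 - measure_pmf.prob (W n (\<phi> i)) (D i)) \<le> (1 / real N) * (real N * \<tau>)"
      by (intro mult_left_mono) auto
    then show ?thesis using N by (simp add: err_prob_def)
  qed
  ultimately show ?thesis unfolding \<tau>_def by (intro exI[of _ "(N, \<phi>, D)"]) (simp add: code_size_def)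
qed

lemma code_one:
  fixes W :: "nat \<Rightarrow> 'x \<Rightarrow> 'y pmf"
  assumes ch: "is_channel X Y W" and x: "x0 \<in> X n"
  shows "\<exists>c. is_code X Y n c \<and> code_size c = 1 \<and> err_prob W n c = 0"
proof -
  have "measure_pmf.prob (W n x0) (Y n) = 1"
  proof -
    have "Y n \<inter> set_pmf (W n x0) = UNIV \<inter> set_pmf (W n x0)" using ch x by (auto simp: is_channel_def)
    then show ?thesis using measure_Int_set_pmf[of "W n x0" "Y n"] measure_Int_set_pmf[of "W n x0" UNIV] by simp
  qed
  then show ?thesis
    by (intro exI[of _ "(1, \<lambda>_. x0, \<lambda>_. Y n)"]) (auto simp: is_code_def code_size_def err_prob_def x disjoint_family_on_def)
qed


definition Sseq :: "real \<Rightarrow> (nat \<Rightarrow> 'x \<Rightarrow> 'y pmf) \<Rightarrow> real \<Rightarrow> (nat \<Rightarrow> 'x pmf) \<Rightarrow> nat \<Rightarrow> real \<Rightarrow> real" where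
  "Sseq \<beta> W R1 P n c = measure_pmf.expectation (P n) (\<lambda>x. measure_pmf.prob (W n x)
        {y. (ln (pmf (W n x) y / pmf (out_dist W P n) y) - real n * R1) / real n powr \<beta> < c})"

lemma Ip_Sseq: "Ip \<beta> W c R1 P = limsup (\<lambda>n. ereal (Sseq \<beta> W R1 P n c))"
  by (simp add: Ip_def Sseq_def)

lemma Sseq_nonneg: "0 \<le> Sseq \<beta> W R1 P n c"
  unfolding Sseq_def by (rule integral_nonneg_AE) auto

lemma achieve_one:
  fixes W :: "nat \<Rightarrow> 'x \<Rightarrow> 'y pmf"
  assumes b: "0 < \<beta>" and ch: "is_channel X Y W" and P: "P \<in> input_seqs X" and th: "0 < \<theta>"
  shows "\<exists>c. is_code X Y n c \<and> (1 \<le> n \<longrightarrow>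
      R2 - 3 * \<theta> \<le> (ln (real (code_size c)) - real n * R1) / real n powr \<beta> \<and>
      err_prob W n c \<le> Sseq \<beta> W R1 P n (R2 - \<theta>) + 2 * exp (- \<theta> * real n powr \<beta>))"
proof -
  have Pn: "set_pmf (P n) \<subseteq> X n" using P by (auto simp: input_seqs_def)
  have "X n \<noteq> {}" using ch by (simp add: is_channel_def)
  then obtain x0 where x0: "x0 \<in> X n" by blast
  show ?thesis
  proof (cases "n = 0")
    case True
    then show ?thesis using code_one[OF ch x0] by auto
  next
    case False
    define t where "t = real n powr \<beta>"
    have t: "0 < t" using False by (simp add: t_def)
    define x where "x = real n * R1 + t * (R2 - 3 * \<theta>)"
    have e2: "0 \<le> 2 * exp (- \<theta> * real n powr \<beta>)" by simp
    show ?thesis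
    proof (cases "x \<le> 0")
      case True
      obtain c where c: "is_code X Y n c" "code_size c = 1" "err_prob W n c = 0" using code_one[OF ch x0] by blast
      have "R2 - 3 * \<theta> \<le> (0 - real n * R1) / t" using True t by (simp add: x_def field_simps)
      then show ?thesis using c Sseq_nonneg[of \<beta> W R1 P n "R2 - \<theta>"] e2 by (intro exI[of _ c]) (simp add: t_def)
    next
      case False
      define N where "N = nat \<lceil>exp x\<rceil>"
      have "(1::int) \<le> \<lceil>exp x\<rceil>" by simp
      then have N1: "1 \<le> N" unfolding N_def by linarith
      have NN: "real N = real_of_int \<lceil>exp x\<rceil>" unfolding N_def using \<open>(1::int) \<le> \<lceil>exp x\<rceil>\<close> by simp
      have Nge: "exp x \<le> real N" unfolding NN by (rule le_of_int_ceiling)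
      have "real N \<le> exp x + 1" unfolding NN by (rule of_int_ceiling_le_add_one)
      also have "\<dots> \<le> 2 * exp x" using False by simp
      finally have Nle: "real N \<le> 2 * exp x" .
      define a where "a = x + \<theta> * t"
      obtain c where c: "is_code X Y n c" "code_size c = N"
        "err_prob W n c \<le> measure_pmf.expectation (P n) (\<lambda>x. measure_pmf.prob (W n x) {y. ln (pmf (W n x) y / pmf (bind_pmf (P n) (W n)) y) \<le> a}) + real N * exp (-a)"
        using feinstein_code[OF ch Pn N1, of a] by blast
      have "real N * exp (-a) \<le> 2 * exp x * exp (-a)" using Nle by simp
      also have "\<dots> = 2 * exp (- \<theta> * t)" by (simp add: a_def exp_add[symmetric])
      finally have T2: "real N * exp (-a) \<le> 2 * exp (- \<theta> * real n powr \<beta>)" by (simp add: t_def)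
      have T1: "measure_pmf.expectation (P n) (\<lambda>x. measure_pmf.prob (W n x) {y. ln (pmf (W n x) y / pmf (bind_pmf (P n) (W n)) y) \<le> a})
            \<le> Sseq \<beta> W R1 P n (R2 - \<theta>)"
        unfolding Sseq_def
      proof (rule integral_mono)
        fix z
        show "measure_pmf.prob (W n z) {y. ln (pmf (W n z) y / pmf (bind_pmf (P n) (W n)) y) \<le> a}
          \<le> measure_pmf.prob (W n z) {y. (ln (pmf (W n z) y / pmf (out_dist W P n) y) - real n * R1) / real n powr \<beta> < R2 - \<theta>}"
        proof (rule measure_pmf.finite_measure_mono)
          show "{y. ln (pmf (W n z) y / pmf (bind_pmf (P n) (W n)) y) \<le> a}
            \<subseteq> {y. (ln (pmf (W n z) y / pmf (out_dist W P n) y) - real n * R1) / real n powr \<beta> < R2 - \<theta>}"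
          proof safe
            fix y assume "ln (pmf (W n z) y / pmf (bind_pmf (P n) (W n)) y) \<le> a"
            then have "ln (pmf (W n z) y / pmf (out_dist W P n) y) - real n * R1 < t * (R2 - \<theta>)"
              using th t mult_pos_pos[OF th t] by (simp add: out_dist_def a_def x_def algebra_simps; linarith)
            then show "(ln (pmf (W n z) y / pmf (out_dist W P n) y) - real n * R1) / real n powr \<beta> < R2 - \<theta>"
              using t by (simp add: t_def pos_divide_less_eq mult.commute)
          qed
        qed simp
      qed (auto intro: intg_prob)
      have "ln (exp x) \<le> ln (real N)" using Nge N1 by (subst ln_le_cancel_iff) auto
      then have "x \<le> ln (real N)" by simp
      then have "R2 - 3 * \<theta> \<le> (ln (real N) - real n * R1) / t" using t by (simp add: x_def field_simps)
      then show ?thesis using c T1 T2 by (intro exI[of _ c]) (simp add: t_def)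
    qed
  qed
qed

lemma achieve_seq:
  fixes W :: "nat \<Rightarrow> 'x \<Rightarrow> 'y pmf"
  assumes b: "0 < \<beta>" and ch: "is_channel X Y W" and P: "P \<in> input_seqs X" and th: "\<And>n. 0 < \<theta> n"
  shows "\<exists>\<Phi>\<in>code_seqs X Y. \<forall>n\<ge>1.
      R2 - 3 * \<theta> n \<le> (ln (real (code_size (\<Phi> n))) - real n * R1) / real n powr \<beta> \<and>
      err_prob W n (\<Phi> n) \<le> Sseq \<beta> W R1 P n (R2 - \<theta> n) + 2 * exp (- \<theta> n * real n powr \<beta>)"
proof -
  have "\<forall>n. \<exists>c. is_code X Y n c \<and> (1 \<le> n \<longrightarrow>
      R2 - 3 * \<theta> n \<le> (ln (real (code_size c)) - real n * R1) / real n powr \<beta> \<and>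
      err_prob W n c \<le> Sseq \<beta> W R1 P n (R2 - \<theta> n) + 2 * exp (- \<theta> n * real n powr \<beta>))"
    using achieve_one[OF b ch P th] by blast
  then have "\<exists>\<Phi>. \<forall>n. is_code X Y n (\<Phi> n) \<and> (1 \<le> n \<longrightarrow>
      R2 - 3 * \<theta> n \<le> (ln (real (code_size (\<Phi> n))) - real n * R1) / real n powr \<beta> \<and>
      err_prob W n (\<Phi> n) \<le> Sseq \<beta> W R1 P n (R2 - \<theta> n) + 2 * exp (- \<theta> n * real n powr \<beta>))"
    by (rule choice)
  then obtain \<Phi> where "\<forall>n. is_code X Y n (\<Phi> n) \<and> (1 \<le> n \<longrightarrow>
      R2 - 3 * \<theta> n \<le> (ln (real (code_size (\<Phi> n))) - real n * R1) / real n powr \<beta> \<and>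
      err_prob W n (\<Phi> n) \<le> Sseq \<beta> W R1 P n (R2 - \<theta> n) + 2 * exp (- \<theta> n * real n powr \<beta>))"
    by blast
  then show ?thesis unfolding code_seqs_def by blast
qed


lemma Jp_mono: "a \<le> b \<Longrightarrow> Jp \<beta> W a R1 P Q \<le> Jp \<beta> W b R1 P Q"
  unfolding Jp_def
  by (intro Limsup_mono always_eventually allI ereal_less_eq(3)[THEN iffD2] integral_mono intg_prob
        measure_pmf.finite_measure_mono) auto

lemma Ip_mono: "a \<le> b \<Longrightarrow> Ip \<beta> W a R1 P \<le> Ip \<beta> W b R1 P"
  unfolding Ip_def
  by (intro Limsup_mono always_eventually allI ereal_less_eq(3)[THEN iffD2] integral_mono intg_prob
        measure_pmf.finite_measure_mono) auto

lemma prob_restrict: "(\<And>y. y \<in> set_pmf p \<Longrightarrow> C y) \<Longrightarrow> measure_pmf.prob p {y. C y \<and> S y} = measure_pmf.prob p {y. S y}"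
proof -
  assume C: "\<And>y. y \<in> set_pmf p \<Longrightarrow> C y"
  have "{y. C y \<and> S y} \<inter> set_pmf p = {y. S y} \<inter> set_pmf p" using C by blast
  then show ?thesis by (metis measure_Int_set_pmf)
qed

lemma Jp_out: "Jp \<beta> W R2 R1 P (out_dist W P) = Ip \<beta> W R2 R1 P"
proof -
  have "measure_pmf.expectation (P n) (\<lambda>x. measure_pmf.prob (W n x)
        {y. 0 < pmf (out_dist W P n) y \<and>
            (ln (pmf (W n x) y / pmf (out_dist W P n) y) - real n * R1) / real n powr \<beta> < R2}) =
    measure_pmf.expectation (P n) (\<lambda>x. measure_pmf.prob (W n x)
        {y. (ln (pmf (W n x) y / pmf (out_dist W P n) y) - real n * R1) / real n powr \<beta> < R2})" for n
  proof (rule integral_cong_AE)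
    show "AE x in measure_pmf (P n). measure_pmf.prob (W n x)
        {y. 0 < pmf (out_dist W P n) y \<and>
            (ln (pmf (W n x) y / pmf (out_dist W P n) y) - real n * R1) / real n powr \<beta> < R2} =
    measure_pmf.prob (W n x)
        {y. (ln (pmf (W n x) y / pmf (out_dist W P n) y) - real n * R1) / real n powr \<beta> < R2}"
      unfolding AE_measure_pmf_iff
    proof (intro ballI prob_restrict)
      fix x y assume x: "x \<in> set_pmf (P n)" and "y \<in> set_pmf (W n x)"
      then have "y \<in> set_pmf (out_dist W P n)" by (auto simp: out_dist_def set_bind_pmf)
      then show "0 < pmf (out_dist W P n) y" by (simp add: set_pmf_iff order.not_eq_order_implies_strict pmf_nonneg)
    qed
  qed simp_all
  then show ?thesis unfolding Jp_def Ip_def by simp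
qed

definition unif_in :: "(nat \<Rightarrow> ('x,'y) code) \<Rightarrow> nat \<Rightarrow> 'x pmf" where
  "unif_in \<Phi> n = map_pmf (fst (snd (\<Phi> n))) (pmf_of_set {1..fst (\<Phi> n)})"

lemma unif_in_input: "\<Phi> \<in> code_seqs X Y \<Longrightarrow> unif_in \<Phi> \<in> input_seqs X"
  unfolding input_seqs_def code_seqs_def unif_in_def
proof (safe)
  fix n x assume "\<forall>n. is_code X Y n (\<Phi> n)" and x: "x \<in> set_pmf (map_pmf (fst (snd (\<Phi> n))) (pmf_of_set {1..fst (\<Phi> n)}))"
  then have c: "is_code X Y n (\<Phi> n)" by blast
  obtain N \<phi> D where e: "\<Phi> n = (N, \<phi>, D)" by (cases "\<Phi> n") auto
  from c e have "1 \<le> N" "\<forall>i\<in>{1..N}. \<phi> i \<in> X n" by (auto simp: is_code_def)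
  then show "x \<in> X n" using x e by auto
qed

lemma dense_le_ereal: "(\<And>x::ereal. x < y \<Longrightarrow> x \<le> z) \<Longrightarrow> y \<le> z"
  by (rule dense_le)



lemma converse_step:
  fixes W :: "nat \<Rightarrow> 'x \<Rightarrow> 'y pmf"
  assumes c: "is_code X Y n (\<Phi> n)" and n: "1 \<le> n" and t: "0 < real n powr \<beta>"
    and big: "z < (ln (real (code_size (\<Phi> n))) - real n * R1) / real n powr \<beta>"
  shows "measure_pmf.expectation (unif_in \<Phi> n) (\<lambda>x. measure_pmf.prob (W n x)
        {y. 0 < pmf (Q n) y \<and> (ln (pmf (W n x) y / pmf (Q n) y) - real n * R1) / real n powr \<beta> < r})
     \<le> err_prob W n (\<Phi> n) + exp (- (z - r) * real n powr \<beta>)"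
proof -
  obtain N \<phi> D where e: "\<Phi> n = (N, \<phi>, D)" by (cases "\<Phi> n") auto
  define t where "t = real n powr \<beta>"
  have tp: "0 < t" using t by (simp add: t_def)
  from c e have N: "1 \<le> N" and dj: "disjoint_family_on D {1..N}" by (auto simp: is_code_def)
  define a where "a = real n * R1 + t * r"
  have set_eq: "{y. 0 < pmf (Q n) y \<and> (ln (pmf (W n x) y / pmf (Q n) y) - real n * R1) / t < r}
      = {y. 0 < pmf (Q n) y \<and> ln (pmf (W n x) y / pmf (Q n) y) < a}" for x
    using tp by (auto simp: a_def pos_divide_less_eq algebra_simps)
  have "measure_pmf.expectation (unif_in \<Phi> n) (\<lambda>x. measure_pmf.prob (W n x)
        {y. 0 < pmf (Q n) y \<and> (ln (pmf (W n x) y / pmf (Q n) y) - real n * R1) / real n powr \<beta> < r})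
      = (\<Sum>i=1..N. measure_pmf.prob (W n (\<phi> i)) {y. 0 < pmf (Q n) y \<and> ln (pmf (W n (\<phi> i)) y / pmf (Q n) y) < a}) / real N"
    using N unfolding unif_in_def e t_def[symmetric] set_eq by (simp add: integral_pmf_of_set)
  also have "\<dots> \<le> (1/real N) * (\<Sum>i=1..N. 1 - measure_pmf.prob (W n (\<phi> i)) (D i)) + exp a / real N"
    by (rule converse_one[OF N dj])
  also have "(1/real N) * (\<Sum>i=1..N. 1 - measure_pmf.prob (W n (\<phi> i)) (D i)) = err_prob W n (\<Phi> n)"
    by (simp add: e err_prob_def)
  also have "exp a / real N \<le> exp (- (z - r) * real n powr \<beta>)"
  proof -
    have "real n * R1 + t * z < ln (real N)" using big tp by (simp add: e code_size_def t_def[symmetric] less_divide_eq algebra_simps)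
    then have "exp (real n * R1 + t * z) < real N" using N by (metis exp_less_cancel_iff exp_ln of_nat_0_less_iff less_le_trans zero_less_one of_nat_1 of_nat_le_iff)
    then have "exp a / real N \<le> exp a / exp (real n * R1 + t * z)"
      using N by (intro divide_left_mono) auto
    also have "\<dots> = exp (- (z - r) * t)" by (simp add: a_def exp_diff[symmetric] algebra_simps)
    finally show ?thesis by (simp add: t_def)
  qed
  finally show ?thesis by simp
qed

lemma converse_core:
  fixes W :: "nat \<Rightarrow> 'x \<Rightarrow> 'y pmf"
  assumes b: "0 < \<beta>" and \<Phi>: "\<Phi> \<in> code_seqs X Y" and r: "ereal r < second_order_rate \<beta> R1 \<Phi>"
  shows "Jp \<beta> W r R1 (unif_in \<Phi>) Q \<le> limsup (\<lambda>n. ereal (err_prob W n (\<Phi> n)))"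
proof -
  obtain z where z: "ereal r < ereal z" "ereal z < second_order_rate \<beta> R1 \<Phi>" using ereal_dense2[OF r] by blast
  then have rz: "0 < z - r" by simp
  have ev: "eventually (\<lambda>n. ereal z < ereal ((ln (real (code_size (\<Phi> n))) - real n * R1) / real n powr \<beta>)) sequentially"
    using less_LiminfD[OF z(2)[unfolded second_order_rate_def]] .
  show ?thesis unfolding Jp_def
  proof (rule limsup_add_null[OF exp_null[OF b rz]])
    show "eventually (\<lambda>n. measure_pmf.expectation (unif_in \<Phi> n) (\<lambda>x. measure_pmf.prob (W n x)
        {y. 0 < pmf (Q n) y \<and> (ln (pmf (W n x) y / pmf (Q n) y) - real n * R1) / real n powr \<beta> < r})
     \<le> err_prob W n (\<Phi> n) + exp (- (z - r) * real n powr \<beta>)) sequentially"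
      using ev eventually_ge_at_top[of 1]
    proof eventually_elim
      case (elim n)
      show ?case
        by (rule converse_step) (use elim \<Phi> in \<open>auto simp: code_seqs_def\<close>)
    qed
  qed
qed



lemma LimJ: "Lim (at_right 0) (\<lambda>\<gamma>. Jp \<beta> W (R - \<gamma>) R1 P Q) = (SUP \<gamma>\<in>{0<..}. Jp \<beta> W (R - \<gamma>) R1 P Q)"
  by (rule Lim_mono_left[where h="\<lambda>c. Jp \<beta> W c R1 P Q"]) (rule Jp_mono)

lemma LimI: "Lim (at_right 0) (\<lambda>\<gamma>. Ip \<beta> W (R - \<gamma>) R1 P) = (SUP \<gamma>\<in>{0<..}. Ip \<beta> W (R - \<gamma>) R1 P)"
  by (rule Lim_mono_left[where h="\<lambda>c. Ip \<beta> W c R1 P"]) (rule Ip_mono)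

lemma converse_Cp:
  fixes W :: "nat \<Rightarrow> 'x \<Rightarrow> 'y pmf"
  assumes b: "0 < \<beta>" and \<Phi>: "\<Phi> \<in> code_seqs X Y" and r: "ereal R2 \<le> second_order_rate \<beta> R1 \<Phi>"
  shows "Lim (at_right 0) (\<lambda>\<gamma>. Jp \<beta> W (R2 - \<gamma>) R1 (unif_in \<Phi>) Q) \<le> limsup (\<lambda>n. ereal (err_prob W n (\<Phi> n)))"
  unfolding LimJ
proof (rule SUP_least)
  fix \<gamma> :: real assume "\<gamma> \<in> {0<..}"
  then have "ereal (R2 - \<gamma>) < ereal R2" by simp
  then have "ereal (R2 - \<gamma>) < second_order_rate \<beta> R1 \<Phi>" using r by (rule order.strict_trans2)
  then show "Jp \<beta> W (R2 - \<gamma>) R1 (unif_in \<Phi>) Q \<le> limsup (\<lambda>n. ereal (err_prob W n (\<Phi> n)))"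
    by (rule converse_core[OF b \<Phi>])
qed

lemma converse_Ccap:
  fixes W :: "nat \<Rightarrow> 'x \<Rightarrow> 'y pmf"
  assumes b: "0 < \<beta>" and \<Phi>: "\<Phi> \<in> code_seqs X Y" and e: "limsup (\<lambda>n. ereal (err_prob W n (\<Phi> n))) \<le> ereal \<epsilon>"
  shows "second_order_rate \<beta> R1 \<Phi> \<le> Jcap \<beta> W \<epsilon> R1 (unif_in \<Phi>) Q"
proof (rule dense_le_ereal)
  fix x assume x: "x < second_order_rate \<beta> R1 \<Phi>"
  show "x \<le> Jcap \<beta> W \<epsilon> R1 (unif_in \<Phi>) Q"
  proof (cases x)
    case (real r)
    have "Jp \<beta> W r R1 (unif_in \<Phi>) Q \<le> ereal \<epsilon>"
      using converse_core[OF b \<Phi>, of r] x e real by (meson order.trans)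
    then show ?thesis unfolding Jcap_def real by (intro Sup_upper) auto
  next
    case PInf then show ?thesis using x by simp
  next
    case MInf then show ?thesis by simp
  qed
qed

lemma Sseq_le1: "Sseq \<beta> W R1 P n c \<le> 1"
proof -
  have "Sseq \<beta> W R1 P n c \<le> measure_pmf.expectation (P n) (\<lambda>x. 1)"
    unfolding Sseq_def by (rule integral_mono) (auto intro: intg_prob)
  then show ?thesis by simp
qed

lemma Ip_bounds: "0 \<le> Ip \<beta> W c R1 P" "Ip \<beta> W c R1 P \<le> 1"
proof -
  have "limsup (\<lambda>n. ereal 0) \<le> limsup (\<lambda>n. ereal (Sseq \<beta> W R1 P n c))"
    by (rule Limsup_mono) (simp add: Sseq_nonneg)
  then show "0 \<le> Ip \<beta> W c R1 P" unfolding Ip_Sseq by (simp add: Limsup_const zero_ereal_def)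
  have "limsup (\<lambda>n. ereal (Sseq \<beta> W R1 P n c)) \<le> limsup (\<lambda>n. ereal 1)"
    by (rule Limsup_mono) (simp add: Sseq_le1)
  then show "Ip \<beta> W c R1 P \<le> 1" unfolding Ip_Sseq by (simp add: Limsup_const one_ereal_def)
qed



lemma achieve_Ccap:
  fixes W :: "nat \<Rightarrow> 'x \<Rightarrow> 'y pmf"
  assumes b: "0 < \<beta>" and ch: "is_channel X Y W" and P: "P \<in> input_seqs X"
  shows "Icap \<beta> W \<epsilon> R1 P \<le> Ccap \<beta> X Y W \<epsilon> R1"
  unfolding Icap_def
proof (rule Sup_least)
  fix u assume "u \<in> ereal ` {R2. Ip \<beta> W R2 R1 P \<le> ereal \<epsilon>}"
  then obtain R2 where u: "u = ereal R2" and R2: "Ip \<beta> W R2 R1 P \<le> ereal \<epsilon>" by auto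
  show "u \<le> Ccap \<beta> X Y W \<epsilon> R1" unfolding u
  proof (rule dense_le_ereal)
    fix x assume x: "x < ereal R2"
    show "x \<le> Ccap \<beta> X Y W \<epsilon> R1"
    proof (cases x)
      case MInf then show ?thesis by simp
    next
      case PInf then show ?thesis using x by simp
    next
      case (real r)
      define \<delta> where "\<delta> = (R2 - r) / 3"
      have d: "0 < \<delta>" using x real by (simp add: \<delta>_def)
      obtain \<Phi> where \<Phi>: "\<Phi> \<in> code_seqs X Y" and pr: "\<forall>n\<ge>1.
          R2 - 3 * \<delta> \<le> (ln (real (code_size (\<Phi> n))) - real n * R1) / real n powr \<beta> \<and>
          err_prob W n (\<Phi> n) \<le> Sseq \<beta> W R1 P n (R2 - \<delta>) + 2 * exp (- \<delta> * real n powr \<beta>)"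
        using achieve_seq[OF b ch P, of "\<lambda>_. \<delta>" R2 R1] d by blast
      have r3: "R2 - 3 * \<delta> = r" unfolding \<delta>_def by (simp add: field_simps)
      have "\<forall>n\<ge>1. ereal r \<le> ereal ((ln (real (code_size (\<Phi> n))) - real n * R1) / real n powr \<beta>)"
        using pr unfolding r3 by simp
      then have "liminf (\<lambda>n. ereal r) \<le> second_order_rate \<beta> R1 \<Phi>"
        unfolding second_order_rate_def
        by (intro Liminf_mono) (auto simp: eventually_sequentially)
      then have rate: "ereal r \<le> second_order_rate \<beta> R1 \<Phi>" by (simp add: Liminf_const)
      have "limsup (\<lambda>n. ereal (err_prob W n (\<Phi> n))) \<le> limsup (\<lambda>n. ereal (Sseq \<beta> W R1 P n (R2 - \<delta>)))"
      proof (rule limsup_add_null)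
        show "(\<lambda>n. 2 * exp (- \<delta> * real n powr \<beta>)) \<longlonglongrightarrow> 0"
          using tendsto_mult[OF tendsto_const exp_null[OF b d], of 2] by simp
        show "eventually (\<lambda>n. err_prob W n (\<Phi> n) \<le> Sseq \<beta> W R1 P n (R2 - \<delta>) + 2 * exp (- \<delta> * real n powr \<beta>)) sequentially"
          unfolding eventually_sequentially using pr by blast
      qed
      also have "\<dots> = Ip \<beta> W (R2 - \<delta>) R1 P" by (simp add: Ip_Sseq)
      also have "\<dots> \<le> Ip \<beta> W R2 R1 P" using d by (intro Ip_mono) simp
      also have "\<dots> \<le> ereal \<epsilon>" by (rule R2)
      finally have "second_order_rate \<beta> R1 \<Phi> \<le> Ccap \<beta> X Y W \<epsilon> R1"
        unfolding Ccap_def using \<Phi> by (intro Sup_upper) auto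
      then show ?thesis using rate real by simp
    qed
  qed
qed



lemma achieve_Cp:
  fixes W :: "nat \<Rightarrow> 'x \<Rightarrow> 'y pmf"
  assumes b: "0 < \<beta>" and ch: "is_channel X Y W" and P: "P \<in> input_seqs X"
  shows "Cp \<beta> X Y W R2 R1 \<le> Lim (at_right 0) (\<lambda>\<gamma>. Ip \<beta> W (R2 - \<gamma>) R1 P)"
proof -
  define L where "L = (SUP \<gamma>\<in>{0<..}. Ip \<beta> W (R2 - \<gamma>) R1 P)"
  have "Ip \<beta> W (R2 - 1) R1 P \<le> L" unfolding L_def by (rule SUP_upper) simp
  then have L0: "0 \<le> L" using Ip_bounds(1)[of \<beta> W "R2 - 1" R1 P] by simp
  have L1: "L \<le> 1" unfolding L_def by (rule SUP_least) (rule Ip_bounds(2))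
  obtain l where Ll: "L = ereal l" using L0 L1 by (cases L) auto
  define Pk where "Pk k n \<longleftrightarrow> Sseq \<beta> W R1 P n (R2 - 1 / (real k + 1)) < l + 1 / (real k + 1)
      \<and> (real k + 1) * (real k + 1) \<le> real n powr \<beta>" for k n
  have ev: "eventually (Pk k) sequentially" for k
  proof -
    have kp: "0 < 1 / (real k + 1)" by simp
    have "Ip \<beta> W (R2 - 1 / (real k + 1)) R1 P \<le> L" unfolding L_def by (rule SUP_upper) (simp add: kp)
    also have "\<dots> < ereal (l + 1 / (real k + 1))" using kp by (simp add: Ll)
    finally have "limsup (\<lambda>n. ereal (Sseq \<beta> W R1 P n (R2 - 1 / (real k + 1)))) < ereal (l + 1 / (real k + 1))"
      by (simp add: Ip_Sseq)
    then have e1: "eventually (\<lambda>n. Sseq \<beta> W R1 P n (R2 - 1 / (real k + 1)) < l + 1 / (real k + 1)) sequentially"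
      by (auto dest: Limsup_lessD)
    have e2: "eventually (\<lambda>n. (real k + 1) * (real k + 1) \<le> real n powr \<beta>) sequentially"
      using powr_top[OF b] unfolding filterlim_at_top by blast
    show ?thesis using e1 e2 unfolding Pk_def by (rule eventually_conj)
  qed
  obtain kn where kn: "filterlim kn at_top sequentially" and evk: "eventually (\<lambda>n. Pk (kn n) n) sequentially"
    using diag[of Pk] ev by blast
  define \<theta> where "\<theta> n = 1 / (real (kn n) + 1)" for n
  have thp: "0 < \<theta> n" for n by (simp add: \<theta>_def)
  obtain \<Phi> where \<Phi>: "\<Phi> \<in> code_seqs X Y" and pr: "\<forall>n\<ge>1.
      R2 - 3 * \<theta> n \<le> (ln (real (code_size (\<Phi> n))) - real n * R1) / real n powr \<beta> \<and>
      err_prob W n (\<Phi> n) \<le> Sseq \<beta> W R1 P n (R2 - \<theta> n) + 2 * exp (- \<theta> n * real n powr \<beta>)"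
    using achieve_seq[OF b ch P, of \<theta> R2 R1] thp by blast
  have inv0: "(\<lambda>k::nat. 1 / (real k + 1)) \<longlonglongrightarrow> 0"
    using LIMSEQ_inverse_real_of_nat by (simp add: inverse_eq_divide add.commute)
  have th0: "\<theta> \<longlonglongrightarrow> 0" unfolding \<theta>_def by (rule filterlim_compose[OF inv0 kn])
  have rate: "ereal R2 \<le> second_order_rate \<beta> R1 \<Phi>"
  proof -
    have "(\<lambda>n. ereal (R2 - 3 * \<theta> n)) \<longlonglongrightarrow> ereal (R2 - 3 * 0)"
      by (intro tendsto_intros th0)
    then have "liminf (\<lambda>n. ereal (R2 - 3 * \<theta> n)) = ereal R2"
      by (simp add: lim_imp_Liminf)
    moreover have "liminf (\<lambda>n. ereal (R2 - 3 * \<theta> n)) \<le> second_order_rate \<beta> R1 \<Phi>"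
      unfolding second_order_rate_def
      by (rule Liminf_mono) (use pr in \<open>auto simp: eventually_sequentially\<close>)
    ultimately show ?thesis by simp
  qed
  define e where "e n = \<theta> n + 2 * exp (- \<theta> n * real n powr \<beta>)" for n
  have exp0: "(\<lambda>n. exp (- \<theta> n * real n powr \<beta>)) \<longlonglongrightarrow> 0"
  proof (rule tendsto_sandwich[of "\<lambda>_. 0" _ _ "\<lambda>n. exp (- real (kn n))"])
    show "eventually (\<lambda>n. 0 \<le> exp (- \<theta> n * real n powr \<beta>)) sequentially" by simp
    show "eventually (\<lambda>n. exp (- \<theta> n * real n powr \<beta>) \<le> exp (- real (kn n))) sequentially"
      using evk
    proof (rule eventually_mono)
      fix n assume "Pk (kn n) n"
      then have h: "(real (kn n) + 1) * (real (kn n) + 1) \<le> real n powr \<beta>" by (simp add: Pk_def)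
      have "real (kn n) + 1 \<le> real n powr \<beta> / (real (kn n) + 1)"
        using h by (simp add: le_divide_eq)
      then have "real (kn n) \<le> \<theta> n * real n powr \<beta>" by (simp add: \<theta>_def)
      then show "exp (- \<theta> n * real n powr \<beta>) \<le> exp (- real (kn n))" by simp
    qed
    show "(\<lambda>_. 0::real) \<longlonglongrightarrow> 0" by simp
    show "(\<lambda>n. exp (- real (kn n))) \<longlonglongrightarrow> 0" by (rule filterlim_compose[OF exp_nat_null kn])
  qed
  have e0: "e \<longlonglongrightarrow> 0"
    unfolding e_def using tendsto_add[OF th0 tendsto_mult[OF tendsto_const exp0, of 2]] by simp
  have "limsup (\<lambda>n. ereal (err_prob W n (\<Phi> n))) \<le> limsup (\<lambda>n. ereal l)"
  proof (rule limsup_add_null[OF e0])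
    show "eventually (\<lambda>n. err_prob W n (\<Phi> n) \<le> l + e n) sequentially"
      using evk eventually_ge_at_top[of 1]
    proof eventually_elim
      case (elim n)
      then have "Sseq \<beta> W R1 P n (R2 - \<theta> n) < l + \<theta> n" by (simp add: Pk_def \<theta>_def)
      then show ?case using pr elim by (force simp: e_def)
    qed
  qed
  also have "\<dots> = L" by (simp add: Ll Limsup_const)
  finally have "limsup (\<lambda>n. ereal (err_prob W n (\<Phi> n))) \<le> L" .
  moreover have "Cp \<beta> X Y W R2 R1 \<le> limsup (\<lambda>n. ereal (err_prob W n (\<Phi> n)))"
    unfolding Cp_def using \<Phi> rate by (intro Inf_lower) auto
  ultimately show ?thesis by (simp add: LimI L_def)
qed



lemma out_dist_output:
  assumes ch: "is_channel X Y W" and P: "P \<in> input_seqs X"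
  shows "out_dist W P \<in> output_seqs Y"
  using ch P unfolding output_seqs_def input_seqs_def is_channel_def out_dist_def
  by (auto simp: set_bind_pmf)

theorem theorem4:
  fixes \<beta> :: real
    and X :: "nat \<Rightarrow> 'x set" and Y :: "nat \<Rightarrow> 'y set" and W :: "nat \<Rightarrow> 'x \<Rightarrow> 'y pmf"
    and R1 R2 :: real
  assumes "0 < \<beta>" and "\<beta> < 1"
    and "is_channel X Y W"
  shows "Cp \<beta> X Y W R2 R1
           = (INF P\<in>input_seqs X. Lim (at_right 0) (\<lambda>\<gamma>. Ip \<beta> W (R2 - \<gamma>) R1 P))
       \<and> (INF P\<in>input_seqs X. Lim (at_right 0) (\<lambda>\<gamma>. Ip \<beta> W (R2 - \<gamma>) R1 P))
           = (INF P\<in>input_seqs X. SUP Q\<in>output_seqs Y.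
                 Lim (at_right 0) (\<lambda>\<gamma>. Jp \<beta> W (R2 - \<gamma>) R1 P Q))
       \<and> (\<forall>\<epsilon>::real. 0 \<le> \<epsilon> \<and> \<epsilon> < 1 \<longrightarrow>
           Ccap \<beta> X Y W \<epsilon> R1 = (SUP P\<in>input_seqs X. Icap \<beta> W \<epsilon> R1 P)
         \<and> (SUP P\<in>input_seqs X. Icap \<beta> W \<epsilon> R1 P)
             = (SUP P\<in>input_seqs X. INF Q\<in>output_seqs Y. Jcap \<beta> W \<epsilon> R1 P Q))"
proof -
  note b = assms(1) and ch = assms(3)
  define LI where "LI P = Lim (at_right 0) (\<lambda>\<gamma>. Ip \<beta> W (R2 - \<gamma>) R1 P)" for P
  define LJ where "LJ P Q = Lim (at_right 0) (\<lambda>\<gamma>. Jp \<beta> W (R2 - \<gamma>) R1 P Q)" for P Q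
  have A1: "Cp \<beta> X Y W R2 R1 \<le> (INF P\<in>input_seqs X. LI P)"
    unfolding LI_def by (rule INF_greatest) (rule achieve_Cp[OF b ch])
  have A2: "(INF P\<in>input_seqs X. LI P) \<le> (INF P\<in>input_seqs X. SUP Q\<in>output_seqs Y. LJ P Q)"
  proof (rule INF_superset_mono[OF subset_refl])
    fix P assume P: "P \<in> input_seqs X"
    have "LI P = LJ P (out_dist W P)" unfolding LI_def LJ_def by (simp add: Jp_out)
    also have "\<dots> \<le> (SUP Q\<in>output_seqs Y. LJ P Q)" by (rule SUP_upper) (rule out_dist_output[OF ch P])
    finally show "LI P \<le> (SUP Q\<in>output_seqs Y. LJ P Q)" .
  qed
  have A3: "(INF P\<in>input_seqs X. SUP Q\<in>output_seqs Y. LJ P Q) \<le> Cp \<beta> X Y W R2 R1"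
    unfolding Cp_def
  proof (rule Inf_greatest, safe)
    fix \<Phi> assume \<Phi>: "\<Phi> \<in> code_seqs X Y" and r: "ereal R2 \<le> second_order_rate \<beta> R1 \<Phi>"
    show "(INF P\<in>input_seqs X. SUP Q\<in>output_seqs Y. LJ P Q) \<le> limsup (\<lambda>n. ereal (err_prob W n (\<Phi> n)))"
    proof (rule INF_lower2[OF unif_in_input[OF \<Phi>]], rule SUP_least)
      fix Q show "LJ (unif_in \<Phi>) Q \<le> limsup (\<lambda>n. ereal (err_prob W n (\<Phi> n)))"
        unfolding LJ_def by (rule converse_Cp[OF b \<Phi> r])
    qed
  qed
  have part1: "Cp \<beta> X Y W R2 R1 = (INF P\<in>input_seqs X. LI P)"
    using A1 A2 A3 by (rule_tac antisym) auto
  have part2: "(INF P\<in>input_seqs X. LI P) = (INF P\<in>input_seqs X. SUP Q\<in>output_seqs Y. LJ P Q)"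
    using A1 A2 A3 by (rule_tac antisym) auto
  have part3: "Ccap \<beta> X Y W \<epsilon> R1 = (SUP P\<in>input_seqs X. Icap \<beta> W \<epsilon> R1 P)
         \<and> (SUP P\<in>input_seqs X. Icap \<beta> W \<epsilon> R1 P)
             = (SUP P\<in>input_seqs X. INF Q\<in>output_seqs Y. Jcap \<beta> W \<epsilon> R1 P Q)" for \<epsilon>
  proof -
    have B1: "(SUP P\<in>input_seqs X. Icap \<beta> W \<epsilon> R1 P) \<le> Ccap \<beta> X Y W \<epsilon> R1"
      by (rule SUP_least) (rule achieve_Ccap[OF b ch])
    have B2: "(SUP P\<in>input_seqs X. INF Q\<in>output_seqs Y. Jcap \<beta> W \<epsilon> R1 P Q) \<le> (SUP P\<in>input_seqs X. Icap \<beta> W \<epsilon> R1 P)"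
    proof (rule SUP_subset_mono[OF subset_refl])
      fix P assume P: "P \<in> input_seqs X"
      have "(INF Q\<in>output_seqs Y. Jcap \<beta> W \<epsilon> R1 P Q) \<le> Jcap \<beta> W \<epsilon> R1 P (out_dist W P)"
        by (rule INF_lower) (rule out_dist_output[OF ch P])
      also have "\<dots> = Icap \<beta> W \<epsilon> R1 P" by (simp add: Jcap_def Icap_def Jp_out)
      finally show "(INF Q\<in>output_seqs Y. Jcap \<beta> W \<epsilon> R1 P Q) \<le> Icap \<beta> W \<epsilon> R1 P" .
    qed
    have B3: "Ccap \<beta> X Y W \<epsilon> R1 \<le> (SUP P\<in>input_seqs X. INF Q\<in>output_seqs Y. Jcap \<beta> W \<epsilon> R1 P Q)"
      unfolding Ccap_def
    proof (rule Sup_least, safe)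
      fix \<Phi> assume \<Phi>: "\<Phi> \<in> code_seqs X Y" and e: "limsup (\<lambda>n. ereal (err_prob W n (\<Phi> n))) \<le> ereal \<epsilon>"
      show "second_order_rate \<beta> R1 \<Phi> \<le> (SUP P\<in>input_seqs X. INF Q\<in>output_seqs Y. Jcap \<beta> W \<epsilon> R1 P Q)"
      proof (rule SUP_upper2[OF unif_in_input[OF \<Phi>]], rule INF_greatest)
        fix Q show "second_order_rate \<beta> R1 \<Phi> \<le> Jcap \<beta> W \<epsilon> R1 (unif_in \<Phi>) Q"
          by (rule converse_Ccap[OF b \<Phi> e])
      qed
    qed
    show ?thesis using B1 B2 B3 by (intro conjI antisym) auto
  qed
  show ?thesis using part1 part2 part3 unfolding LI_def LJ_def by blast
qed

end
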